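(* Let $10\le n\le 12$, and let $\frac{p_1}{q_1},\frac{p_2}{q_2},\frac{p_3}{q_3},\dots$ be the convergents (in lowest terms) of the simple continued fraction expansion of $\sqrt n$, indexed so that $\frac{p_1}{q_1}=\frac31$. (1) For each positive odd integer $k$, set $d_k=\frac12(p_k-3)$, $m_k=\frac12(q_k-1)$ and $D_k=d_kH-m_kE$. Then $D_k$ is an integral effective divisor class with $\chi(D_k)=1$ and $2B\cdot D_k<B\cdot K$. (2) If $D$ is an effective divisor class with $\chi(D)\ge1$ and there is an ample divisor $A_t$ with $2A_t\cdot D<A_t\cdot K$, then $D=D_k$ for some positive odd integer $k$.
   Context: Let $X$ be the blowup of $\mathbb{P}^2_{\mathbb{C}}$ at $n$ very general points, with $H$ the pullback of a line class, $E_i$ the exceptional divisors, $E=\sum_iE_i$, and $K=K_X=-3H+E$. For real $t$, $A_t=tH-E$, and $B=\sqrt nH-E$. Write $\chi(D)=\chi(\mathcal{O}_X(D))$; effective means the class of an effective divisor (zero allowed). *)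

theory Defs
  imports Complex_Main
begin

fun cf_rem :: "real \<Rightarrow> nat \<Rightarrow> real" where
  "cf_rem x 0 = x"
| "cf_rem x (Suc i) = 1 / (cf_rem x i - of_int \<lfloor>cf_rem x i\<rfloor>)"

definition cf_a :: "real \<Rightarrow> nat \<Rightarrow> int" where
  "cf_a x i = \<lfloor>cf_rem x i\<rfloor>"

text \<open>Standard recurrences h_i = a_i h_(i-1) + h_(i-2), with h_(-2)=0, h_(-1)=1,
  k_(-2)=1, k_(-1)=0; the value at index j stands for h_(j-2), resp. k_(j-2).
  These convergents are automatically in lowest terms.\<close>
fun cnum :: "real \<Rightarrow> nat \<Rightarrow> int" where
  "cnum x 0 = 0"
| "cnum x (Suc 0) = 1"
| "cnum x (Suc (Suc i)) = cf_a x i * cnum x (Suc i) + cnum x i"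

fun cden :: "real \<Rightarrow> nat \<Rightarrow> int" where
  "cden x 0 = 1"
| "cden x (Suc 0) = 0"
| "cden x (Suc (Suc i)) = cf_a x i * cden x (Suc i) + cden x i"

text \<open>Paper's indexing: p_1/q_1 = a_0/1 is the first convergent, i.e. p_k = h_(k-1).\<close>
definition cf_p :: "real \<Rightarrow> nat \<Rightarrow> int" where "cf_p x k = cnum x (k + 1)"
definition cf_q :: "real \<Rightarrow> nat \<Rightarrow> int" where "cf_q x k = cden x (k + 1)"

type_synonym pt = "complex \<times> complex \<times> complex"

text \<open>A homogeneous form of degree d in x,y,z, given by its coefficient function on exponents.\<close>
definition form_monos :: "nat \<Rightarrow> (nat \<times> nat \<times> nat) set" where
  "form_monos d = {(a,b,e). a \<le> d \<and> b \<le> d \<and> e \<le> d \<and> a + b + e = d}"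

definition hom_form :: "nat \<Rightarrow> (nat \<times> nat \<times> nat \<Rightarrow> complex) \<Rightarrow> bool" where
  "hom_form d c \<longleftrightarrow> (\<forall>u. c u \<noteq> 0 \<longrightarrow> u \<in> form_monos d)"

definition ffac :: "nat \<Rightarrow> nat \<Rightarrow> nat" where
  "ffac a i = fact a div fact (a - i)"

text \<open>Value at P of the partial derivative d^i/dx^i d^j/dy^j d^l/dz^l of the form.\<close>
definition pd_eval :: "nat \<Rightarrow> (nat \<times> nat \<times> nat \<Rightarrow> complex) \<Rightarrow> nat \<times> nat \<times> nat \<Rightarrow> pt \<Rightarrow> complex" where
  "pd_eval d c ijl P =
     (case ijl of (i,j,l) \<Rightarrow> case P of (x,y,z) \<Rightarrow>
       (\<Sum>(a,b,e)\<in>form_monos d.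
          if i \<le> a \<and> j \<le> b \<and> l \<le> e then
            c (a,b,e) * of_nat (ffac a i * ffac b j * ffac e l) * x ^ (a - i) * y ^ (b - j) * z ^ (e - l)
          else 0))"

definition mult_ge :: "nat \<Rightarrow> (nat \<times> nat \<times> nat \<Rightarrow> complex) \<Rightarrow> int \<Rightarrow> pt \<Rightarrow> bool" where
  "mult_ge d c m P \<longleftrightarrow> (\<forall>i j l. int (i + j + l) < m \<longrightarrow> pd_eval d c (i,j,l) P = 0)"

text \<open>A class dH - sum_i m_i E_i is represented by (d, m) (only m i for i < n matters).
  It is effective iff there is a nonzero form of degree d with multiplicity at least m_i at pts i.\<close>
definition effective :: "nat \<Rightarrow> (nat \<Rightarrow> pt) \<Rightarrow> int \<Rightarrow> (nat \<Rightarrow> int) \<Rightarrow> bool" where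
  "effective n pts d m \<longleftrightarrow> d \<ge> 0 \<and>
     (\<exists>c. hom_form (nat d) c \<and> (\<exists>u. c u \<noteq> 0) \<and> (\<forall>i<n. mult_ge (nat d) c (m i) (pts i)))"

text \<open>Intersection form for real classes: H^2 = 1, E_i^2 = -1, H.E_i = 0, E_i.E_j = 0.\<close>
definition inter :: "nat \<Rightarrow> real \<times> (nat \<Rightarrow> real) \<Rightarrow> real \<times> (nat \<Rightarrow> real) \<Rightarrow> real" where
  "inter n D D' = fst D * fst D' - (\<Sum>i<n. snd D i * snd D' i)"

definition icls :: "int \<Rightarrow> (nat \<Rightarrow> int) \<Rightarrow> real \<times> (nat \<Rightarrow> real)" where
  "icls d m = (of_int d, \<lambda>i. of_int (m i))"

definition canon :: "real \<times> (nat \<Rightarrow> real)" where "canon = (-3, \<lambda>_. -1)"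
definition Acls :: "real \<Rightarrow> real \<times> (nat \<Rightarrow> real)" where "Acls t = (t, \<lambda>_. 1)"
definition Bcls :: "nat \<Rightarrow> real \<times> (nat \<Rightarrow> real)" where "Bcls n = (sqrt n, \<lambda>_. 1)"

text \<open>Euler characteristic chi(O_X(D)) (Riemann-Roch on the rational surface X):
  chi(dH - sum m_i E_i) = (d+1)(d+2)/2 - sum_i m_i(m_i+1)/2.\<close>
definition chi :: "nat \<Rightarrow> int \<Rightarrow> (nat \<Rightarrow> int) \<Rightarrow> int" where
  "chi n d m = (d + 1) * (d + 2) div 2 - (\<Sum>i<n. m i * (m i + 1) div 2)"

text \<open>Ampleness of the real divisor A_t (Nakai-Moishezon criterion for R-divisors):
  A_t^2 > 0 and A_t . C > 0 for every curve, equivalently for every nonzero effective class.\<close>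
definition ample_A :: "nat \<Rightarrow> (nat \<Rightarrow> pt) \<Rightarrow> real \<Rightarrow> bool" where
  "ample_A n pts t \<longleftrightarrow> inter n (Acls t) (Acls t) > 0 \<and>
     (\<forall>d m. effective n pts d m \<and> (d \<noteq> 0 \<or> (\<exists>i<n. m i \<noteq> 0)) \<longrightarrow> inter n (Acls t) (icls d m) > 0)"

text \<open>Polynomials in N variables: finitely supported coefficient functions on exponent vectors
  supported in the first N variables.\<close>
definition mpoly_ok :: "nat \<Rightarrow> ((nat \<Rightarrow> nat) \<Rightarrow> complex) \<Rightarrow> bool" where
  "mpoly_ok N c \<longleftrightarrow> finite {\<alpha>. c \<alpha> \<noteq> 0} \<and> (\<forall>\<alpha>. c \<alpha> \<noteq> 0 \<longrightarrow> (\<forall>v\<ge>N. \<alpha> v = 0))"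

definition mpoly_eval :: "nat \<Rightarrow> ((nat \<Rightarrow> nat) \<Rightarrow> complex) \<Rightarrow> (nat \<Rightarrow> complex) \<Rightarrow> complex" where
  "mpoly_eval N c x = (\<Sum>\<alpha>\<in>{\<alpha>. c \<alpha> \<noteq> 0}. c \<alpha> * (\<Prod>v<N. x v ^ \<alpha> v))"

definition flat_pts :: "(nat \<Rightarrow> pt) \<Rightarrow> nat \<Rightarrow> complex" where
  "flat_pts pts v = (case pts (v div 3) of (x,y,z) \<Rightarrow>
       if v mod 3 = 0 then x else if v mod 3 = 1 then y else z)"

text \<open>P holds for n very general points of P^2: there is a countable family of nonzero polynomials
  in the 3n homogeneous coordinates such that P holds for every configuration of nonzero coordinate
  vectors outside the union of their zero loci.\<close>
definition very_general :: "nat \<Rightarrow> ((nat \<Rightarrow> pt) \<Rightarrow> bool) \<Rightarrow> bool" where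
  "very_general n P \<longleftrightarrow> (\<exists>F :: nat \<Rightarrow> ((nat \<Rightarrow> nat) \<Rightarrow> complex).
     (\<forall>j. mpoly_ok (3 * n) (F j) \<and> (\<exists>\<alpha>. F j \<alpha> \<noteq> 0)) \<and>
     (\<forall>pts. (\<forall>i<n. pts i \<noteq> (0,0,0)) \<and> (\<forall>j. mpoly_eval (3 * n) (F j) (flat_pts pts) \<noteq> 0) \<longrightarrow> P pts))"

end

theory Submission
  imports Defs
begin


definition cc :: "nat \<Rightarrow> int" where "cc n = int n - 9"
definition aodd :: "nat \<Rightarrow> int" where "aodd n = (if n = 10 then 6 else if n = 11 then 3 else 2)"

lemma sqrt_bounds:
  assumes "n \<in> {10,11,12::nat}"
  shows "3 < sqrt (real n) \<and> sqrt (real n) < 4"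
proof -
  have "real n < 4^2" "3^2 < real n" using assms by auto
  then show ?thesis using real_less_lsqrt[of 4 "real n"] real_less_rsqrt[of 3 "real n"] by simp
qed

lemma cf_rem_sqrt:
  assumes n: "n \<in> {10,11,12::nat}"
  shows "cf_rem (sqrt n) (2*j+1) = (sqrt n + 3) / cc n \<and> cf_rem (sqrt n) (2*j+2) = sqrt n + 3"
proof (induction j)
  let ?s = "sqrt (real n)"
  have s2: "?s * ?s = n" by simp
  have sb: "3 < ?s" "?s < 4" using sqrt_bounds[OF n] by auto
  have ccpos: "real_of_int (cc n) > 0" using n by (auto simp: cc_def)
  have ccr: "real_of_int (cc n) = ?s * ?s - 9" using n by (auto simp: cc_def)
  have inv1: "1 / (?s - 3) = (?s + 3) / cc n"
    using sb ccpos by (simp add: field_simps ccr) 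
  have fl1: "\<lfloor>(?s + 3) / cc n\<rfloor> = aodd n"
  proof -
    have "aodd n \<le> (?s + 3) / cc n \<and> (?s + 3) / cc n < aodd n + 1"
      using n sb by (auto simp: cc_def aodd_def field_simps)
    then show ?thesis by (simp add: floor_eq_iff)
  qed
  have fl2: "\<lfloor>?s + 3\<rfloor> = 6" using sb by (simp add: floor_eq_iff)
  have ca: "real_of_int (cc n * aodd n) = 6" using n by (auto simp: cc_def aodd_def)
  have inv2: "1 / ((?s + 3) / cc n - aodd n) = ?s + 3"
  proof -
    have "(?s + 3) / cc n - aodd n = (?s - 3) / cc n"
      using ccpos ca by (simp add: field_simps)
    then show ?thesis using inv1 ccpos sb by (simp add: field_simps ccr)
  qed
  have fl0: "\<lfloor>?s\<rfloor> = 3" using sb by (simp add: floor_eq_iff)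
  {
    case 0
    have r1: "cf_rem ?s 1 = (?s + 3) / cc n"
      using inv1 fl0 by (simp add: numeral_eq_Suc)
    show ?case using r1 fl1 inv2 by (simp add: numeral_eq_Suc)
  next
    case (Suc j)
    have e1: "2 * Suc j + 1 = Suc (2*j+2)" "2 * Suc j + 2 = Suc (2 * Suc j + 1)" by simp_all
    have r1: "cf_rem ?s (2 * Suc j + 1) = (?s + 3) / cc n"
      using Suc inv1 fl2 by (simp only: e1 cf_rem.simps; simp)
    show ?case using r1 fl1 inv2 by (simp only: e1 cf_rem.simps; simp)
  }
qed

lemma cf_a_sqrt:
  assumes n: "n \<in> {10,11,12::nat}"
  shows "cf_a (sqrt n) 0 = 3" "cf_a (sqrt n) (2*j+1) = aodd n" "cf_a (sqrt n) (2*j+2) = 6"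
proof -
  have fl0: "\<lfloor>sqrt (real n)\<rfloor> = 3" using sqrt_bounds[OF n] by (simp add: floor_eq_iff)
  have fl2: "\<lfloor>sqrt (real n) + 3\<rfloor> = 6" using sqrt_bounds[OF n] by (simp add: floor_eq_iff)
  have fl1: "\<lfloor>(sqrt (real n) + 3) / cc n\<rfloor> = aodd n"
  proof -
    have sb: "3 < sqrt (real n)" "sqrt (real n) < 4" using sqrt_bounds[OF n] by auto
    have "aodd n \<le> (sqrt (real n) + 3) / cc n \<and> (sqrt (real n) + 3) / cc n < aodd n + 1"
      using n sb by (auto simp: cc_def aodd_def field_simps)
    then show ?thesis by (simp add: floor_eq_iff)
  qed
  show "cf_a (sqrt n) 0 = 3" using fl0 by (simp add: cf_a_def)
  show "cf_a (sqrt n) (2*j+1) = aodd n" using fl1 by (simp only: cf_a_def cf_rem_sqrt[OF n, of j, THEN conjunct1])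
  show "cf_a (sqrt n) (2*j+2) = 6" using fl2 by (simp only: cf_a_def cf_rem_sqrt[OF n, of j, THEN conjunct2])
qed



definition uu :: "nat \<Rightarrow> int" where "uu n = (if n = 10 then 19 else if n = 11 then 10 else 7)"
definition vv :: "nat \<Rightarrow> int" where "vv n = (if n = 10 then 6 else if n = 11 then 3 else 2)"

fun PQ :: "nat \<Rightarrow> nat \<Rightarrow> int \<times> int" where
  "PQ n 0 = (3, 1)"
| "PQ n (Suc j) = (uu n * fst (PQ n j) + int n * vv n * snd (PQ n j),
                   vv n * fst (PQ n j) + uu n * snd (PQ n j))"

lemma cnum_PQ:
  assumes n: "n \<in> {10,11,12::nat}"
  shows "cnum (sqrt n) (2*j+2) = fst (PQ n j) \<and> cden (sqrt n) (2*j+2) = snd (PQ n j) \<and>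
         cc n * cnum (sqrt n) (2*j+3) = 3 * fst (PQ n j) + int n * snd (PQ n j) \<and>
         cc n * cden (sqrt n) (2*j+3) = fst (PQ n j) + 3 * snd (PQ n j)"
proof (induction j)
  case 0
  have e: "(2::nat) = Suc (Suc 0)" "(3::nat) = Suc (Suc (Suc 0))" by simp_all
  have a0: "cf_a (sqrt n) 0 = 3" and a1: "cf_a (sqrt n) (Suc 0) = aodd n"
    using cf_a_sqrt(1)[OF n] cf_a_sqrt(2)[OF n, of 0] by simp_all
  show ?case using n by (auto simp add: e a0 a1 cc_def aodd_def)
next
  case (Suc j)
  let ?x = "sqrt (real n)"
  have e: "2 * Suc j + 2 = Suc (Suc (2*j+2))" "2 * Suc j + 3 = Suc (Suc (2*j+3))" by simp_all
  have a2: "cf_a ?x (2*j+2) = 6" using cf_a_sqrt(3)[OF n, of j] by simp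
  have e3: "2 * Suc j + 1 = 2*j+3" by simp
  have a3: "cf_a ?x (2*j+3) = aodd n" using cf_a_sqrt(2)[OF n, of "Suc j"] unfolding e3 .
  have rn4: "cnum ?x (2 * Suc j + 2) = 6 * cnum ?x (2*j+3) + cnum ?x (2*j+2)"
    using a2 by (simp only: e cnum.simps) (simp add: numeral_eq_Suc)
  have rd4: "cden ?x (2 * Suc j + 2) = 6 * cden ?x (2*j+3) + cden ?x (2*j+2)"
    using a2 by (simp only: e cden.simps) (simp add: numeral_eq_Suc)
  have e5: "2 * Suc j + 2 = Suc (2*j+3)" by simp
  have rn5: "cnum ?x (2 * Suc j + 3) = aodd n * cnum ?x (2 * Suc j + 2) + cnum ?x (2*j+3)"
    using a3 by (simp only: e(2) e5 cnum.simps)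
  have rd5: "cden ?x (2 * Suc j + 3) = aodd n * cden ?x (2 * Suc j + 2) + cden ?x (2*j+3)"
    using a3 by (simp only: e(2) e5 cden.simps)
  obtain P Q where pq: "PQ n j = (P, Q)" by force
  have IH: "cnum ?x (2*j+2) = P" "cden ?x (2*j+2) = Q"
     "cc n * cnum ?x (2*j+3) = 3 * P + int n * Q" "cc n * cden ?x (2*j+3) = P + 3 * Q"
    using Suc.IH pq by auto
  have ps: "PQ n (Suc j) = (uu n * P + int n * vv n * Q, vv n * P + uu n * Q)" using pq by simp
  show ?case unfolding ps fst_conv snd_conv rn5 rd5 unfolding rn4 rd4 IH(1,2)
    using n IH(3,4) by (auto simp: cc_def aodd_def uu_def vv_def)
qed



lemma PQ_inv:
  assumes n: "n \<in> {10,11,12::nat}"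
  shows "fst (PQ n j) ^ 2 - int n * snd (PQ n j) ^ 2 = 9 - int n \<and> odd (fst (PQ n j)) \<and> odd (snd (PQ n j))
         \<and> fst (PQ n j) > 0 \<and> snd (PQ n j) > 0"
proof (induction j)
  case 0
  then show ?case by simp
next
  case (Suc j)
  obtain P Q where pq: "PQ n j = (P, Q)" by force
  have IH: "P^2 - int n * Q^2 = 9 - int n" "odd P" "odd Q" "P > 0" "Q > 0" using Suc.IH pq by auto
  have ps: "PQ n (Suc j) = (uu n * P + int n * vv n * Q, vv n * P + uu n * Q)" using pq by simp
  have norm: "(uu n * P + int n * vv n * Q)^2 - int n * (vv n * P + uu n * Q)^2
      = (uu n ^2 - int n * vv n ^ 2) * (P^2 - int n * Q^2)"
    by (simp add: power2_eq_square algebra_simps)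
  have u1: "uu n ^2 - int n * vv n ^ 2 = 1" using n by (auto simp: uu_def vv_def)
  have pos: "uu n > 0" "vv n > 0" using n by (auto simp: uu_def vv_def)
  have par: "odd (uu n * P + int n * vv n * Q) \<and> odd (vv n * P + uu n * Q)"
  proof -
    consider "n = 10" | "n = 11" | "n = 12" using n by auto
    then show ?thesis by cases (simp_all add: uu_def vv_def IH(2,3))
  qed
  have pp: "uu n * P + int n * vv n * Q > 0" "vv n * P + uu n * Q > 0"
    using pos IH(4,5) n by (auto intro!: add_pos_pos mult_pos_pos)
  show ?case unfolding ps fst_conv snd_conv using norm u1 IH(1) par pp
    by simp
qed

lemma nonsq: fixes p k :: int assumes "k^2 < p^2" "p^2 < (k+1)^2" "p \<ge> 0" "k \<ge> 0" shows False
proof (cases "p \<le> k")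
  case True then have "p^2 \<le> k^2" using assms by (intro power_mono) auto
  then show False using assms by linarith
next
  case False then have "(k+1)^2 \<le> p^2" using assms by (intro power_mono) auto
  then show False using assms by linarith
qed

lemma nonsq': fixes p k N :: int assumes "p^2 = N" "k^2 < N" "N < (k+1)^2" "p \<ge> 0" "k \<ge> 0" shows False
  using nonsq[of k p] assms by simp

lemma small_sol:
  fixes p q :: int
  assumes n: "n \<in> {10,11,12::nat}" and pos: "p > 0" "q > 0" "q < 7"
    and eq: "p^2 - int n * q^2 = 9 - int n"
  shows "p = 3 \<and> q = 1"
proof -
  have qc: "q = 1 \<or> q = 2 \<or> q = 3 \<or> q = 4 \<or> q = 5 \<or> q = 6" using pos by auto
  have p2: "p^2 = int n * q^2 + 9 - int n" using eq by simp
  have p0: "p \<ge> 0" using pos by simp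
  consider "int n = 10" | "int n = 11" | "int n = 12" using n by auto
  then have "q = 1"
  proof cases
    case 1
    then have p2': "p^2 = 10 * q^2 - 1" using p2 by simp
    show ?thesis using qc
      apply (elim disjE)
      apply simp
      using nonsq'[OF p2' _ _ p0, of 6] apply simp
      using nonsq'[OF p2' _ _ p0, of 9] apply simp
      using nonsq'[OF p2' _ _ p0, of 12] apply simp
      using nonsq'[OF p2' _ _ p0, of 15] apply simp
      using nonsq'[OF p2' _ _ p0, of 18] apply simp
      done
  next
    case 2
    then have p2': "p^2 = 11 * q^2 - 2" using p2 by simp
    show ?thesis using qc
      apply (elim disjE)
      apply simp
      using nonsq'[OF p2' _ _ p0, of 6] apply simp
      using nonsq'[OF p2' _ _ p0, of 9] apply simp
      using nonsq'[OF p2' _ _ p0, of 13] apply simp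
      using nonsq'[OF p2' _ _ p0, of 16] apply simp
      using nonsq'[OF p2' _ _ p0, of 19] apply simp
      done
  next
    case 3
    then have p2': "p^2 = 12 * q^2 - 3" using p2 by simp
    show ?thesis using qc
      apply (elim disjE)
      apply simp
      using nonsq'[OF p2' _ _ p0, of 6] apply simp
      using nonsq'[OF p2' _ _ p0, of 10] apply simp
      using nonsq'[OF p2' _ _ p0, of 13] apply simp
      using nonsq'[OF p2' _ _ p0, of 17] apply simp
      using nonsq'[OF p2' _ _ p0, of 20] apply simp
      done
  qed
  then have "p^2 = 3^2" using p2 by simp
  then have "p = 3" using pos power2_eq_iff_nonneg[of p 3] by linarith
  then show ?thesis using \<open>q = 1\<close> by simp
qed



lemma descent_step:
  fixes p q u v N :: int
  assumes p2: "p^2 = N * q^2 + 9 - N" and hu: "u^2 = 1 + N * v^2" and hv: "v^2 * (N - 9) = 2 * (u - 1)"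
    and pos: "p > 0" "q > 1" "u > 0" "v > 0" "N > 9" and big: "N * q^2 > u^2 * (N - 9)"
  shows "u * p - N * v * q > 0" "u * q - v * p > 0" "u * q - v * p < q"
    "(u * p - N * v * q)^2 - N * (u * q - v * p)^2 = 9 - N"
    "u * (u * p - N * v * q) + N * v * (u * q - v * p) = p"
    "v * (u * p - N * v * q) + u * (u * q - v * p) = q"
proof -
  have i1: "(u*p)^2 - (N*v*q)^2 = N * q^2 - u^2 * (N - 9)"
  proof -
    have "(u*p)^2 - (N*v*q)^2 = u^2 * p^2 - N * (N * v^2) * q^2" by (simp add: power_mult_distrib power2_eq_square)
    also have "\<dots> = u^2 * (N * q^2 + 9 - N) - N * (u^2 - 1) * q^2" using p2 hu by simp
    also have "\<dots> = N * q^2 - u^2 * (N - 9)" by (simp add: algebra_simps)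
    finally show ?thesis .
  qed
  have "(N*v*q)^2 < (u*p)^2" using i1 big by linarith
  then have "N*v*q < u*p" by (rule power_less_imp_less_base) (use pos in simp)
  then show "u * p - N * v * q > 0" by linarith
  have i2: "(u*q)^2 - (v*p)^2 = q^2 + v^2 * (N - 9)"
  proof -
    have "(u*q)^2 - (v*p)^2 = u^2 * q^2 - v^2 * p^2" by (simp add: power_mult_distrib)
    also have "\<dots> = (1 + N * v^2) * q^2 - v^2 * (N * q^2 + 9 - N)" using p2 hu by simp
    also have "\<dots> = q^2 + v^2 * (N - 9)" by (simp add: algebra_simps)
    finally show ?thesis .
  qed
  have "v^2 * (N - 9) > 0" using pos by simp
  moreover have "q^2 > 0" using pos by simp
  ultimately have "(v*p)^2 < (u*q)^2" using i2 by linarith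
  then have "v*p < u*q" by (rule power_less_imp_less_base) (use pos in simp)
  then show "u * q - v * p > 0" by linarith
  have i3: "(v*p)^2 - ((u - 1)*q)^2 = 2 * (u - 1) * q^2 - v^2 * (N - 9)"
  proof -
    have "(v*p)^2 - ((u - 1)*q)^2 = v^2 * p^2 - (u^2 - 2*u + 1) * q^2" by (simp add: power_mult_distrib power2_diff)
    also have "\<dots> = v^2 * (N * q^2 + 9 - N) - ((1 + N * v^2) - 2*u + 1) * q^2" using p2 hu by simp
    also have "\<dots> = 2 * (u - 1) * q^2 - v^2 * (N - 9)" by (simp add: algebra_simps)
    finally show ?thesis .
  qed
  have q2: "q^2 > 1" using pos by (simp add: one_less_power)
  have u1: "u > 1"
  proof -
    have "v^2 * (N - 9) > 0" using pos by simp
    then show ?thesis using hv by simp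
  qed
  have "2 * (u - 1) * q^2 > 2 * (u - 1) * 1" using q2 u1 by (intro mult_strict_left_mono) auto
  then have "((u - 1)*q)^2 < (v*p)^2" using i3 hv by linarith
  then have "(u-1)*q < v*p" by (rule power_less_imp_less_base) (use pos in simp)
  then show "u * q - v * p < q" by (simp add: algebra_simps)
  show "(u * p - N * v * q)^2 - N * (u * q - v * p)^2 = 9 - N"
  proof -
    have "(u * p - N * v * q)^2 - N * (u * q - v * p)^2 = (u^2 - N * v^2) * (p^2 - N * q^2)"
      by (simp add: power2_eq_square algebra_simps)
    also have "\<dots> = 9 - N" using hu p2 by simp
    finally show ?thesis .
  qed
  show "u * (u * p - N * v * q) + N * v * (u * q - v * p) = p"
  proof -
    have "u * (u * p - N * v * q) + N * v * (u * q - v * p) = (u^2 - N * v^2) * p"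
      by (simp add: power2_eq_square algebra_simps)
    also have "\<dots> = p" using hu by simp
    finally show ?thesis .
  qed
  show "v * (u * p - N * v * q) + u * (u * q - v * p) = q"
  proof -
    have "v * (u * p - N * v * q) + u * (u * q - v * p) = (u^2 - N * v^2) * q"
      by (simp add: power2_eq_square algebra_simps)
    also have "\<dots> = q" using hu by simp
    finally show ?thesis .
  qed
qed

lemma descent:
  assumes n: "n \<in> {10,11,12::nat}"
  shows "p > 0 \<Longrightarrow> q > 0 \<Longrightarrow> p^2 - int n * q^2 = 9 - int n \<Longrightarrow> \<exists>j. PQ n j = (p, q)"
proof (induction "nat q" arbitrary: p q rule: less_induct)
  case less
  show ?case
  proof (cases "q < 7")
    case True
    then have "p = 3 \<and> q = 1" using small_sol[OF n less.prems(1,2) True less.prems(3)] by simp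
    then show ?thesis by (intro exI[of _ 0]) simp
  next
    case False
    let ?u = "uu n" and ?v = "vv n" and ?N = "int n"
    have hu: "?u^2 = 1 + ?N * ?v^2" and hv: "?v^2 * (?N - 9) = 2 * (?u - 1)"
      and pos: "?u > 0" "?v > 0" "?N > 9"
      using n by (auto simp: uu_def vv_def)
    have big: "?N * q^2 > ?u^2 * (?N - 9)"
    proof -
      have "q^2 \<ge> 7^2" using False by (intro power_mono) auto
      then have "?N * q^2 \<ge> ?N * 49" using pos by simp
      moreover have "?N * 49 > ?u^2 * (?N - 9)" using n by (auto simp: uu_def)
      ultimately show ?thesis by linarith
    qed
    have p2: "p^2 = ?N * q^2 + 9 - ?N" using less.prems(3) by simp
    have q1: "q > 1" using False by simp
    note st = descent_step[OF p2 hu hv less.prems(1) q1 pos big]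
    have "nat (?u * q - ?v * p) < nat q" using st(2,3) by simp
    from less.hyps[OF this st(1,2,4)] obtain j where j: "PQ n j = (?u * p - ?N * ?v * q, ?u * q - ?v * p)" by blast
    have "PQ n (Suc j) = (p, q)" using j st(5,6) by simp
    then show ?thesis by blast
  qed
qed



lemma even_consec: "2 * ((x::int) * (x + 1) div 2) = x * (x + 1)"
proof -
  have "even (x * (x + 1))" by simp
  then show ?thesis by simp
qed

lemma chi_identity:
  "8 * chi n d m = (2*d+3)^2 - (\<Sum>i<n. (2*m i+1)^2) + int n - 1"
proof -
  have a: "8 * ((d + 1) * (d + 2) div 2) = (2*d+3)^2 - 1"
  proof -
    have "(d + 1) * (d + 2) = (d+1) * ((d+1)+1)" by simp
    then have "8 * ((d + 1) * (d + 2) div 2) = 4 * ((d+1) * ((d+1)+1))" using even_consec[of "d+1"] by simp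
    then show ?thesis by (simp add: power2_eq_square algebra_simps)
  qed
  have b: "8 * (m i * (m i + 1) div 2) = (2 * m i + 1)^2 - 1" for i
  proof -
    have "8 * (m i * (m i + 1) div 2) = 4 * (m i * (m i + 1))" using even_consec[of "m i"] by simp
    then show ?thesis by (simp add: power2_eq_square algebra_simps)
  qed
  have "8 * (\<Sum>i<n. m i * (m i + 1) div 2) = (\<Sum>i<n. (2 * m i + 1)^2 - 1)"
    by (simp add: sum_distrib_left b)
  also have "\<dots> = (\<Sum>i<n. (2 * m i + 1)^2) - int n" by (simp add: sum_subtractf)
  finally have c: "8 * (\<Sum>i<n. m i * (m i + 1) div 2) = (\<Sum>i<n. (2 * m i + 1)^2) - int n" .
  show ?thesis unfolding chi_def using a c by (simp add: algebra_simps)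
qed

lemma inter_A: "inter n (Acls t) (icls d m) = t * of_int d - (\<Sum>i<n. real_of_int (m i))"
  "inter n (Acls t) canon = -3 * t + real n"
  by (simp_all add: inter_def Acls_def icls_def canon_def)

lemma inter_B: "inter n (Bcls n) (icls d (\<lambda>_. mk)) = sqrt n * of_int d - real n * of_int mk"
  "inter n (Bcls n) canon = -3 * sqrt n + real n"
  by (simp_all add: inter_def Bcls_def icls_def canon_def)



lemma sum_dev:
  fixes q :: "nat \<Rightarrow> int"
  shows "(\<Sum>l<n. (int n * q l - (\<Sum>i<n. q i))^2) = int n * (int n * (\<Sum>i<n. (q i)^2) - (\<Sum>i<n. q i)^2)"
proof -
  define S where "S = (\<Sum>i<n. q i)"
  have "(\<Sum>l<n. (int n * q l - S)^2) = (\<Sum>l<n. int n^2 * (q l)^2 - 2 * int n * S * q l + S^2)"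
    by (intro sum.cong) (simp_all add: power2_eq_square algebra_simps)
  also have "\<dots> = int n^2 * (\<Sum>l<n. (q l)^2) - 2 * int n * S * S + int n * S^2"
    by (simp add: sum.distrib sum_subtractf sum_distrib_left S_def)
  also have "\<dots> = int n * (int n * (\<Sum>i<n. (q i)^2) - S^2)"
    by (simp add: power2_eq_square algebra_simps)
  finally show ?thesis unfolding S_def .
qed

lemma close_pairs:
  fixes m :: "nat \<Rightarrow> int"
  assumes n: "n \<ge> 1"
    and V: "int n * (\<Sum>i<n. (2 * m i + 1)^2) - (\<Sum>i<n. 2 * m i + 1)^2 < 3 * int n"
    and ij: "i < n" "j < n"
  shows "\<bar>m i - m j\<bar> \<le> 1"
proof (cases "i = j")
  case True then show ?thesis by simp
next
  case False
  define q where "q l = 2 * m l + 1" for l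
  define S where "S = (\<Sum>i<n. q i)"
  have sd: "(\<Sum>l<n. (int n * q l - S)^2) < 3 * int n^2"
  proof -
    have "(\<Sum>l<n. (int n * q l - S)^2) = int n * (int n * (\<Sum>i<n. (q i)^2) - S^2)"
      unfolding S_def by (rule sum_dev)
    also have "\<dots> < int n * (3 * int n)" using V n unfolding q_def S_def by (intro mult_strict_left_mono) auto
    finally show ?thesis by (simp add: power2_eq_square)
  qed
  have "(int n * q i - S)^2 + (int n * q j - S)^2 = (\<Sum>l\<in>{i,j}. (int n * q l - S)^2)"
    using False by simp
  also have "\<dots> \<le> (\<Sum>l<n. (int n * q l - S)^2)"
    using ij by (intro sum_mono2) auto
  finally have ab: "(int n * q i - S)^2 + (int n * q j - S)^2 < 3 * int n^2" using sd by linarith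
  have "(int n * q i - int n * q j)^2 \<le> 2 * ((int n * q i - S)^2 + (int n * q j - S)^2)"
  proof -
    have "0 \<le> ((int n * q i - S) + (int n * q j - S))^2" by simp
    then show ?thesis by (simp add: power2_eq_square algebra_simps)
  qed
  moreover have "(int n * q i - int n * q j)^2 = int n^2 * (q i - q j)^2"
    by (simp add: power_mult_distrib[symmetric] right_diff_distrib)
  ultimately have "int n^2 * (q i - q j)^2 \<le> 2 * ((int n * q i - S)^2 + (int n * q j - S)^2)" by simp
  also have "\<dots> < 2 * (3 * int n^2)" using ab by simp
  finally have "int n^2 * (q i - q j)^2 < int n^2 * 6" by simp
  then have "(q i - q j)^2 < 6" using n by simp
  then have "4 * (m i - m j)^2 < 6" unfolding q_def by (simp add: power2_eq_square algebra_simps)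
  then have "(m i - m j)^2 < 2" by simp
  then have "\<bar>m i - m j\<bar> < 2"
  proof (rule contrapos_pp)
    assume "\<not> \<bar>m i - m j\<bar> < 2"
    then have "2^2 \<le> \<bar>m i - m j\<bar>^2" by (intro power_mono) auto
    then show "\<not> (m i - m j)^2 < 2" by simp
  qed
  then show ?thesis by simp
qed

lemma uniform:
  fixes m :: "nat \<Rightarrow> int"
  assumes n: "n \<ge> 5"
    and V: "int n * (\<Sum>i<n. (2 * m i + 1)^2) - (\<Sum>i<n. 2 * m i + 1)^2 < 3 * int n"
  shows "\<forall>i<n. m i = m 0"
proof -
  define k where "k = Min (m ` {..<n})"
  have "0 \<in> {..<n}" using n by simp
  then have ne: "m ` {..<n} \<noteq> {}" by blast
  have "k \<in> m ` {..<n}" unfolding k_def using ne by (intro Min_in) auto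
  then obtain i0 where i0: "i0 < n" "m i0 = k" by auto
  have kle: "k \<le> m i" if "i < n" for i unfolding k_def using that by (intro Min_le) auto
  define e where "e i = m i - k" for i
  have e01: "e i = 0 \<or> e i = 1" if "i < n" for i
    using kle[OF that] close_pairs[OF _ V that i0(1)] n i0(2) unfolding e_def by auto
  have esq: "e i^2 = e i" if "i < n" for i using e01[OF that] by auto
  define r where "r = 2 * k + 1"
  define c where "c = (\<Sum>i<n. e i)"
  have qi: "2 * m i + 1 = r + 2 * e i" for i unfolding r_def e_def by simp
  have S: "(\<Sum>i<n. 2 * m i + 1) = int n * r + 2 * c"
    unfolding qi c_def by (simp add: sum.distrib sum_distrib_left)
  have "(\<Sum>i<n. (2 * m i + 1)^2) = (\<Sum>i<n. r^2 + 4 * r * e i + 4 * e i)"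
    unfolding qi by (intro sum.cong) (simp_all add: power2_eq_square algebra_simps esq[unfolded power2_eq_square] e01)
  also have "\<dots> = int n * r^2 + 4 * r * c + 4 * c"
    unfolding c_def by (simp add: sum.distrib sum_distrib_left)
  finally have T: "(\<Sum>i<n. (2 * m i + 1)^2) = int n * r^2 + 4 * r * c + 4 * c" .
  have key: "int n * (\<Sum>i<n. (2 * m i + 1)^2) - (\<Sum>i<n. 2 * m i + 1)^2 = 4 * c * (int n - c)"
    unfolding S T by (simp add: power2_eq_square algebra_simps)
  have c0: "c \<ge> 0" unfolding c_def using e01 by (intro sum_nonneg) force
  have cn: "c \<le> int n"
  proof -
    have "c \<le> (\<Sum>i<n. 1)" unfolding c_def using e01 by (intro sum_mono) force
    then show ?thesis by simp
  qed
  have "\<not> (0 < c \<and> c < int n)"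
  proof
    assume a: "0 < c \<and> c < int n"
    have "0 \<le> (c - 1) * (int n - c - 1)" using a by simp
    then have "4 * c * (int n - c) \<ge> 4 * (int n - 1)" by (simp add: algebra_simps)
    moreover have "int n \<ge> 5" using n by simp
    moreover have "4 * c * (int n - c) < 3 * int n" using V key by simp
    ultimately show False
      by arith
  qed
  then have "c = 0 \<or> c = int n" using c0 cn by linarith
  then show ?thesis
  proof
    assume "c = 0"
    then have "\<forall>i\<in>{..<n}. e i = 0" unfolding c_def
      using sum_nonneg_eq_0_iff[of "{..<n}" e] e01 by force
    then show ?thesis unfolding e_def using n by auto
  next
    assume "c = int n"
    then have "(\<Sum>i<n. 1 - e i) = 0" unfolding c_def by (simp add: sum_subtractf)
    then have "\<forall>i\<in>{..<n}. 1 - e i = 0"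
      using sum_nonneg_eq_0_iff[of "{..<n}" "\<lambda>i. 1 - e i"] e01 by force
    then have h: "\<And>i. i < n \<Longrightarrow> m i - k = 1" unfolding e_def
    proof -
      fix i assume "\<forall>i\<in>{..<n}. 1 - (m i - k) = 0" "i < n"
      then have "1 - (m i - k) = 0" by blast
      then show "m i - k = 1" by simp
    qed
    have "m 0 - k = 1" using h n by simp
    then show ?thesis using h by (metis diff_add_cancel)
  qed
qed



lemma part2:
  fixes t :: real and d :: int and m :: "nat \<Rightarrow> int"
  assumes n: "n \<in> {10,11,12::nat}" and d0: "d \<ge> 0" and ch: "chi n d m \<ge> 1" and t0: "t > 0"
    and tn: "t^2 > real n"
    and ineq: "2 * inter n (Acls t) (icls d m) < inter n (Acls t) canon"
  shows "\<exists>k. odd k \<and> 2 * d = cf_p (sqrt n) k - 3 \<and> (\<forall>i<n. 2 * m i = cf_q (sqrt n) k - 1)"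
proof -
  define p where "p = 2 * d + 3"
  define S where "S = (\<Sum>i<n. 2 * m i + 1)"
  define T where "T = (\<Sum>i<n. (2 * m i + 1)^2)"
  have p0: "p > 0" unfolding p_def using d0 by simp
  have Sr: "real_of_int S = 2 * (\<Sum>i<n. real_of_int (m i)) + real n"
    unfolding S_def by (simp add: sum.distrib sum_distrib_left)
  have tpS: "t * real_of_int p < real_of_int S"
    using ineq unfolding inter_A Sr p_def by (simp add: algebra_simps)
  have "(t * real_of_int p)^2 < (real_of_int S)^2"
    using tpS t0 p0 by (intro power_strict_mono) auto
  moreover have "real n * (real_of_int p)^2 < (t * real_of_int p)^2"
    using tn p0 by (simp add: power_mult_distrib)
  ultimately have "real n * (real_of_int p)^2 < (real_of_int S)^2" by linarith
  then have Sp: "int n * p^2 < S^2"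
    by (metis (mono_tags, opaque_lifting) of_int_less_iff of_int_mult of_int_of_nat_eq of_int_power)
  have Spos: "S > 0"
  proof -
    have "0 < t * real_of_int p" using t0 p0 by simp
    then show ?thesis using tpS by linarith
  qed
  have ci: "8 * chi n d m = p^2 - T + int n - 1" unfolding p_def T_def by (rule chi_identity)
  have Tle: "T \<le> p^2 + int n - 9" using ci ch by linarith
  have "int n * T - S^2 \<le> int n * (p^2 + int n - 9) - S^2" using Tle by (simp add: mult_left_mono)
  also have "\<dots> < int n * (int n - 9)" using Sp by (simp add: algebra_simps)
  also have "\<dots> \<le> 3 * int n" using n by auto
  finally have V: "int n * T - S^2 < 3 * int n" .
  have unif: "\<forall>i<n. m i = m 0" using n by (intro uniform V[unfolded S_def T_def]) auto
  define q where "q = 2 * m 0 + 1"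
  have Sq: "S = int n * q"
  proof -
    have "S = (\<Sum>i<n. q)" unfolding S_def q_def using unif by (intro sum.cong refl) (metis lessThan_iff)
    then show ?thesis by simp
  qed
  have Tq: "T = int n * q^2"
  proof -
    have "T = (\<Sum>i<n. q^2)" unfolding T_def q_def using unif by (intro sum.cong refl) (metis lessThan_iff)
    then show ?thesis by simp
  qed
  have q0: "q > 0" using Spos Sq n by (simp add: zero_less_mult_iff)
  have neg: "p^2 < int n * q^2"
  proof -
    have "int n * p^2 < int n * (int n * q^2)" using Sp Sq by (simp add: power_mult_distrib power2_eq_square mult_ac)
    moreover have "int n > 0" using n by auto
    ultimately show ?thesis using mult_less_cancel_left_pos by blast
  qed
  have ci2: "8 * chi n d m = p^2 - int n * q^2 + int n - 1" using ci Tq by simp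
  have "8 * chi n d m < 12" using ci2 neg n by auto
  then have "chi n d m = 1" using ch by simp
  then have pell: "p^2 - int n * q^2 = 9 - int n" using ci2 by simp
  obtain j where j: "PQ n j = (p, q)" using descent[OF n p0 q0 pell] by blast
  have c: "cnum (sqrt n) (2*j+2) = p" "cden (sqrt n) (2*j+2) = q" using cnum_PQ[OF n, of j] j by auto
  show ?thesis
  proof (intro exI conjI allI impI)
    show "odd (2*j+1)" by simp
    show "2 * d = cf_p (sqrt n) (2*j+1) - 3" unfolding cf_p_def using c p_def by simp
    fix i assume "i < n"
    then have "m i = m 0" using unif by blast
    then show "2 * m i = cf_q (sqrt n) (2*j+1) - 1" unfolding cf_q_def using c q_def by simp
  qed
qed



lemma lin_sol:
  fixes L :: "'e \<Rightarrow> 'u \<Rightarrow> 'a::field"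
  assumes "finite E"
  shows "finite U \<Longrightarrow> card E < card U \<Longrightarrow> \<exists>c. (\<exists>u\<in>U. c u \<noteq> 0) \<and> (\<forall>e\<in>E. (\<Sum>u\<in>U. L e u * c u) = 0)"
  using assms
proof (induction E arbitrary: U L rule: finite_induct)
  case empty
  then have "U \<noteq> {}" by auto
  then obtain u where u: "u \<in> U" by blast
  show ?case by (rule exI[of _ "\<lambda>x. if x = u then 1 else 0"]) (use u in auto)
next
  case (insert e0 E)
  have cE: "card E < card U" using insert by simp
  show ?case
  proof (cases "\<forall>u\<in>U. L e0 u = 0")
    case True
    obtain c where c: "\<exists>u\<in>U. c u \<noteq> 0" "\<forall>e\<in>E. (\<Sum>u\<in>U. L e u * c u) = 0"
      using insert.IH[OF insert.prems(1) cE] by blast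
    show ?thesis using c True by (intro exI[of _ c]) auto
  next
    case False
    then obtain u0 where u0: "u0 \<in> U" "L e0 u0 \<noteq> 0" by blast
    define U' where "U' = U - {u0}"
    have fU': "finite U'" using insert.prems(1) unfolding U'_def by simp
    have cU': "card E < card U'" using insert.prems(1,2) insert.hyps u0(1) unfolding U'_def by simp
    define L' where "L' e u = L e u - L e u0 * L e0 u / L e0 u0" for e u
    obtain c' where c': "\<exists>u\<in>U'. c' u \<noteq> 0" "\<forall>e\<in>E. (\<Sum>u\<in>U'. L' e u * c' u) = 0"
      using insert.IH[OF fU' cU', of L'] by blast
    define c where "c u = (if u = u0 then - (\<Sum>v\<in>U'. L e0 v * c' v) / L e0 u0 else c' u)" for u
    have split: "(\<Sum>u\<in>U. L e u * c u) = L e u0 * c u0 + (\<Sum>u\<in>U'. L e u * c' u)" for e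
    proof -
      have "(\<Sum>u\<in>U. L e u * c u) = L e u0 * c u0 + (\<Sum>u\<in>U'. L e u * c u)"
        unfolding U'_def using insert.prems(1) u0(1) by (simp add: sum.remove)
      moreover have "(\<Sum>u\<in>U'. L e u * c u) = (\<Sum>u\<in>U'. L e u * c' u)"
        unfolding U'_def c_def by (intro sum.cong) auto
      ultimately show ?thesis by simp
    qed
    have "\<exists>u\<in>U. c u \<noteq> 0" using c' unfolding c_def U'_def by auto
    moreover have "(\<Sum>u\<in>U. L e u * c u) = 0" if e: "e \<in> insert e0 E" for e
    proof (cases "e = e0")
      case True
      then show ?thesis unfolding split using u0(2) by (simp add: c_def)
    next
      case False
      then have eE: "e \<in> E" using e by simp
      have "(\<Sum>u\<in>U'. L' e u * c' u) = (\<Sum>u\<in>U'. L e u * c' u - (L e u0 / L e0 u0) * (L e0 u * c' u))"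
        unfolding L'_def by (intro sum.cong) (simp_all add: algebra_simps)
      also have "\<dots> = (\<Sum>u\<in>U'. L e u * c' u) - (L e u0 / L e0 u0) * (\<Sum>u\<in>U'. L e0 u * c' u)"
        by (simp add: sum_subtractf sum_distrib_left)
      also have "\<dots> = L e u0 * c u0 + (\<Sum>u\<in>U'. L e u * c' u)"
        unfolding c_def by simp
      finally have "L e u0 * c u0 + (\<Sum>u\<in>U'. L e u * c' u) = (\<Sum>u\<in>U'. L' e u * c' u)" by simp
      then show ?thesis unfolding split using c'(2) eE by simp
    qed
    ultimately show ?thesis by blast
  qed
qed



definition tri :: "nat \<Rightarrow> (nat \<times> nat) set" where "tri k = {(a,b). a + b < k}"

lemma finite_tri: "finite (tri k)"
proof -
  have "tri k \<subseteq> {..<k} \<times> {..<k}" unfolding tri_def by auto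
  then show ?thesis by (rule finite_subset) simp
qed

lemma card_tri: "card (tri k) * 2 = k * (k + 1)"
proof (induction k)
  case 0
  have "tri 0 = {}" unfolding tri_def by auto
  then show ?case by simp
next
  case (Suc k)
  have eq: "tri (Suc k) = tri k \<union> (\<lambda>a. (a, k - a)) ` {..k}"
    unfolding tri_def by (auto simp: image_iff)
  have disj: "tri k \<inter> (\<lambda>a. (a, k - a)) ` {..k} = {}" unfolding tri_def by auto
  have inj: "inj_on (\<lambda>a. (a, k - a)) {..k}" by (auto simp: inj_on_def)
  have "card (tri (Suc k)) = card (tri k) + (k + 1)"
    unfolding eq using disj inj finite_tri by (simp add: card_Un_disjoint card_image)
  then show ?case using Suc.IH by (simp add: algebra_simps)
qed

lemma finite_form_monos: "finite (form_monos d)"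
proof -
  have "form_monos d \<subseteq> {..d} \<times> {..d} \<times> {..d}" unfolding form_monos_def by auto
  then show ?thesis by (rule finite_subset) simp
qed

lemma card_form_monos: "card (form_monos d) = card (tri (d + 1))"
proof -
  have inj: "inj_on (\<lambda>(a,b,e). (a,b)) (form_monos d)" unfolding form_monos_def by (auto simp: inj_on_def)
  have img: "(\<lambda>(a,b,e). (a,b)) ` (form_monos d) = tri (d + 1)"
  proof
    show "(\<lambda>(a,b,e). (a,b)) ` (form_monos d) \<subseteq> tri (d + 1)" unfolding form_monos_def tri_def by auto
    show "tri (d + 1) \<subseteq> (\<lambda>(a,b,e). (a,b)) ` (form_monos d)"
    proof
      fix x assume "x \<in> tri (d + 1)"
      then obtain a b where x: "x = (a, b)" "a + b \<le> d" unfolding tri_def by auto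
      then have "(a, b, d - a - b) \<in> form_monos d" unfolding form_monos_def by auto
      then show "x \<in> (\<lambda>(a,b,e). (a,b)) ` (form_monos d)" using x by force
    qed
  qed
  show ?thesis using card_image[OF inj] img by simp
qed



lemma ffac_split: "i \<le> a \<Longrightarrow> fact a = ffac a i * fact (a - i)"
  unfolding ffac_def using fact_dvd[of "a - i" a] by (metis diff_le_self dvd_div_mult_self)

lemma ffac_Suc: assumes "i < a" shows "ffac a (Suc i) = ffac a i * (a - i)"
proof -
  have f1: "fact a = ffac a (Suc i) * fact (a - Suc i)" using assms by (intro ffac_split) simp
  have f2: "fact a = ffac a i * fact (a - i)" using assms by (intro ffac_split) simp
  have f3: "fact (a - i) = (a - i) * (fact (a - Suc i) :: nat)"
  proof -
    have e: "a - i = Suc (a - Suc i)" using assms by arith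
    show ?thesis unfolding e by simp
  qed
  have "ffac a (Suc i) * fact (a - Suc i) = (ffac a i * (a - i)) * fact (a - Suc i)"
    using f1 f2 f3 by (simp add: mult_ac)
  then show ?thesis by simp
qed

definition tm :: "(nat \<times> nat \<times> nat \<Rightarrow> complex) \<Rightarrow> nat \<Rightarrow> nat \<Rightarrow> nat \<Rightarrow> complex \<Rightarrow> complex \<Rightarrow> complex \<Rightarrow> nat \<times> nat \<times> nat \<Rightarrow> complex" where
  "tm c i j l x y z u = (case u of (a,b,e) \<Rightarrow>
          if i \<le> a \<and> j \<le> b \<and> l \<le> e then
            c (a,b,e) * of_nat (ffac a i * ffac b j * ffac e l) * x ^ (a - i) * y ^ (b - j) * z ^ (e - l)
          else 0)"

lemma pd_eval_tm: "pd_eval d c (i,j,l) (x,y,z) = (\<Sum>u\<in>form_monos d. tm c i j l x y z u)"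
  unfolding pd_eval_def tm_def by (simp only: prod.case)

lemma tm_x: "x * tm c (Suc i) j l x y z (a,b,e) = of_nat (a - i) * tm c i j l x y z (a,b,e)"
proof (cases "i < a \<and> j \<le> b \<and> l \<le> e")
  case True
  have xp: "x * x ^ (a - Suc i) = x ^ (a - i)"
  proof -
    have "a - i = Suc (a - Suc i)" using True by arith
    then show ?thesis by simp
  qed
  have "x * tm c (Suc i) j l x y z (a,b,e) =
        c (a,b,e) * of_nat (ffac a i * (a - i) * ffac b j * ffac e l) * (x * x ^ (a - Suc i)) * y ^ (b - j) * z ^ (e - l)"
    using True unfolding tm_def by (simp add: ffac_Suc mult_ac)
  also have "\<dots> = of_nat (a - i) * tm c i j l x y z (a,b,e)"
    unfolding xp using True unfolding tm_def by (simp add: mult_ac)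
  finally show ?thesis .
next
  case False
  then show ?thesis unfolding tm_def by auto
qed

lemma tm_y: "y * tm c i (Suc j) l x y z (a,b,e) = of_nat (b - j) * tm c i j l x y z (a,b,e)"
proof (cases "i \<le> a \<and> j < b \<and> l \<le> e")
  case True
  have yp: "y * y ^ (b - Suc j) = y ^ (b - j)"
  proof -
    have "b - j = Suc (b - Suc j)" using True by arith
    then show ?thesis by simp
  qed
  have "y * tm c i (Suc j) l x y z (a,b,e) =
        c (a,b,e) * of_nat (ffac a i * (ffac b j * (b - j)) * ffac e l) * x ^ (a - i) * (y * y ^ (b - Suc j)) * z ^ (e - l)"
    using True unfolding tm_def by (simp add: ffac_Suc mult_ac)
  also have "\<dots> = of_nat (b - j) * tm c i j l x y z (a,b,e)"
    unfolding yp using True unfolding tm_def by (simp add: mult_ac)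
  finally show ?thesis .
next
  case False
  then show ?thesis unfolding tm_def by auto
qed

lemma tm_z: "z * tm c i j (Suc l) x y z (a,b,e) = of_nat (e - l) * tm c i j l x y z (a,b,e)"
proof (cases "i \<le> a \<and> j \<le> b \<and> l < e")
  case True
  have zp: "z * z ^ (e - Suc l) = z ^ (e - l)"
  proof -
    have "e - l = Suc (e - Suc l)" using True by arith
    then show ?thesis by simp
  qed
  have "z * tm c i j (Suc l) x y z (a,b,e) =
        c (a,b,e) * of_nat (ffac a i * ffac b j * (ffac e l * (e - l))) * x ^ (a - i) * y ^ (b - j) * (z * z ^ (e - Suc l))"
    using True unfolding tm_def by (simp add: ffac_Suc mult_ac)
  also have "\<dots> = of_nat (e - l) * tm c i j l x y z (a,b,e)"
    unfolding zp using True unfolding tm_def by (simp add: mult_ac)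
  finally show ?thesis .
next
  case False
  then show ?thesis unfolding tm_def by auto
qed

lemma euler:
  "x * pd_eval d c (Suc i, j, l) (x,y,z) + y * pd_eval d c (i, Suc j, l) (x,y,z) + z * pd_eval d c (i, j, Suc l) (x,y,z)
   = of_nat (d - (i + j + l)) * pd_eval d c (i, j, l) (x,y,z)"
proof -
  have t: "x * tm c (Suc i) j l x y z u + y * tm c i (Suc j) l x y z u + z * tm c i j (Suc l) x y z u
        = of_nat (d - (i + j + l)) * tm c i j l x y z u" if u: "u \<in> form_monos d" for u
  proof -
    obtain a b e where ue: "u = (a,b,e)" by (cases u) auto
    have s: "a + b + e = d" using u ue unfolding form_monos_def by auto
    have "x * tm c (Suc i) j l x y z u + y * tm c i (Suc j) l x y z u + z * tm c i j (Suc l) x y z u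
        = (of_nat (a - i) + of_nat (b - j) + of_nat (e - l)) * tm c i j l x y z u"
      unfolding ue tm_x tm_y tm_z by (simp add: algebra_simps)
    also have "\<dots> = of_nat (d - (i + j + l)) * tm c i j l x y z u"
    proof (cases "i \<le> a \<and> j \<le> b \<and> l \<le> e")
      case True
      then have "(a - i) + (b - j) + (e - l) = d - (i + j + l)" using s by simp
      then have "of_nat (a - i) + of_nat (b - j) + of_nat (e - l) = (of_nat (d - (i + j + l)) :: complex)"
        by (metis of_nat_add)
      then show ?thesis by simp
    next
      case False
      then show ?thesis unfolding ue tm_def by auto
    qed
    finally show ?thesis .
  qed
  show ?thesis unfolding pd_eval_tm
    by (simp add: sum_distrib_left sum.distrib[symmetric] t cong: sum.cong)
qed

lemma reduction:
  assumes z: "z \<noteq> 0" and h: "\<And>a b. int (a + b) < m \<Longrightarrow> pd_eval d c (a, b, 0) (x,y,z) = 0"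
  shows "mult_ge d c m (x,y,z)"
proof -
  have "\<forall>i j. int (i + j + l) < m \<longrightarrow> pd_eval d c (i, j, l) (x,y,z) = 0" for l
  proof (induction l)
    case 0 then show ?case using h by simp
  next
    case (Suc l)
    show ?case
    proof (intro allI impI)
      fix i j assume ij: "int (i + j + Suc l) < m"
      have e: "x * pd_eval d c (Suc i, j, l) (x,y,z) + y * pd_eval d c (i, Suc j, l) (x,y,z) + z * pd_eval d c (i, j, Suc l) (x,y,z)
         = of_nat (d - (i + j + l)) * pd_eval d c (i, j, l) (x,y,z)" by (rule euler)
      have "pd_eval d c (Suc i, j, l) (x,y,z) = 0" using Suc.IH ij by simp
      moreover have "pd_eval d c (i, Suc j, l) (x,y,z) = 0" using Suc.IH ij by simp
      moreover have "pd_eval d c (i, j, l) (x,y,z) = 0" using Suc.IH ij by simp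
      ultimately have "z * pd_eval d c (i, j, Suc l) (x,y,z) = 0" using e by simp
      then show "pd_eval d c (i, j, Suc l) (x,y,z) = 0" using z by simp
    qed
  qed
  then show ?thesis unfolding mult_ge_def by blast
qed



lemma tm_factor: "tm c i j l x y z u = tm (\<lambda>_. 1) i j l x y z u * c u"
  unfolding tm_def by (cases u) auto

lemma effective_exists:
  assumes d0: "d \<ge> 0" and m0: "mk \<ge> 0" and ch: "chi n d (\<lambda>_. mk) \<ge> 1"
    and z: "\<forall>i<n. snd (snd (pts i)) \<noteq> 0"
  shows "effective n pts d (\<lambda>_. mk)"
proof -
  define D where "D = nat d"
  define M where "M = nat mk"
  define U where "U = form_monos D"
  define E where "E = {..<n} \<times> tri M"
  have fU: "finite U" unfolding U_def by (rule finite_form_monos)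
  have fE: "finite E" unfolding E_def using finite_tri by simp
  have cU: "2 * int (card U) = (d + 1) * (d + 2)"
  proof -
    have "card U * 2 = (D + 1) * (D + 2)" unfolding U_def card_form_monos using card_tri[of "D+1"] by simp
    then have "int (card U * 2) = int ((D + 1) * (D + 2))" by simp
    then show ?thesis unfolding D_def using d0 by (simp add: algebra_simps)
  qed
  have cE: "2 * int (card E) = int n * (mk * (mk + 1))"
  proof -
    have "card E = n * card (tri M)" unfolding E_def by (simp add: card_cartesian_product)
    then have "card E * 2 = n * (M * (M + 1))" using card_tri[of M] by (simp add: mult_ac)
    then have "int (card E * 2) = int (n * (M * (M + 1)))" by simp
    then show ?thesis unfolding M_def using m0 by (simp add: algebra_simps)
  qed
  have ev1: "(d + 1) * (d + 2) div 2 = int (card U)" using cU by simp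
  have ev2: "mk * (mk + 1) div 2 * int n = int (card E)"
  proof -
    have "even (mk * (mk + 1))" by simp
    then obtain Y where Y: "mk * (mk + 1) = 2 * Y" by blast
    then have "mk * (mk + 1) div 2 = Y" by simp
    moreover have "2 * int (card E) = 2 * (int n * Y)" using cE Y by simp
    ultimately show ?thesis by simp
  qed
  have "chi n d (\<lambda>_. mk) = int (card U) - int (card E)"
    unfolding chi_def ev1 using ev2 by (simp add: mult.commute)
  then have lt: "card E < card U" using ch by simp
  define L where "L e u = (case e of (i, a, b) \<Rightarrow> case pts i of (x, y, w) \<Rightarrow> tm (\<lambda>_. 1) a b 0 x y w u)" for e u
  obtain c where c: "\<exists>u\<in>U. c u \<noteq> 0" "\<forall>e\<in>E. (\<Sum>u\<in>U. L e u * c u) = 0"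
    using lin_sol[OF fE fU lt, of L] by blast
  define c' where "c' u = (if u \<in> U then c u else 0)" for u
  have hf: "hom_form D c'" unfolding hom_form_def c'_def U_def by auto
  have nz: "\<exists>u. c' u \<noteq> 0" using c(1) unfolding c'_def by auto
  have mg: "mult_ge D c' mk (pts i)" if i: "i < n" for i
  proof -
    obtain x y w where p: "pts i = (x, y, w)" by (cases "pts i") auto
    have w: "w \<noteq> 0" using z i p by auto
    have "pd_eval D c' (a, b, 0) (x, y, w) = 0" if ab: "int (a + b) < mk" for a b
    proof -
      have eE: "(i, a, b) \<in> E" unfolding E_def tri_def M_def using i ab by auto
      have "pd_eval D c' (a, b, 0) (x, y, w) = (\<Sum>u\<in>U. tm c' a b 0 x y w u)"
        unfolding pd_eval_tm U_def ..
      also have "\<dots> = (\<Sum>u\<in>U. L (i, a, b) u * c u)"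
        by (intro sum.cong refl) (simp add: tm_factor[of c'] L_def p c'_def)
      also have "\<dots> = 0" using c(2) eE by blast
      finally show ?thesis .
    qed
    then show ?thesis unfolding p by (intro reduction w) auto
  qed
  show ?thesis unfolding effective_def using d0 hf nz mg unfolding D_def by blast
qed



definition Fw :: "nat \<Rightarrow> nat \<Rightarrow> ((nat \<Rightarrow> nat) \<Rightarrow> complex)" where
  "Fw n j = (\<lambda>\<alpha>. if \<alpha> = (\<lambda>v. if j < n \<and> v = 3 * j + 2 then 1 else 0) then 1 else 0)"

lemma Fw_support: "{\<alpha>. Fw n j \<alpha> \<noteq> 0} = {(\<lambda>v. if j < n \<and> v = 3 * j + 2 then 1 else 0)}"
  unfolding Fw_def by auto

lemma Fw_ok: "mpoly_ok (3 * n) (Fw n j) \<and> (\<exists>\<alpha>. Fw n j \<alpha> \<noteq> 0)"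
  unfolding mpoly_ok_def Fw_support by (auto simp: Fw_def)

lemma Fw_eval: assumes "i < n"
  shows "mpoly_eval (3 * n) (Fw n i) (flat_pts pts) = snd (snd (pts i))"
proof -
  have "mpoly_eval (3 * n) (Fw n i) (flat_pts pts) = (\<Prod>v<3*n. flat_pts pts v ^ (if i < n \<and> v = 3 * i + 2 then 1 else 0))"
    unfolding mpoly_eval_def Fw_support by (simp add: Fw_def)
  also have "\<dots> = (\<Prod>v<3*n. if v = 3 * i + 2 then flat_pts pts v else 1)"
    using assms by (intro prod.cong) auto
  also have "\<dots> = flat_pts pts (3 * i + 2)" using assms by (simp add: prod.delta)
  also have "\<dots> = snd (snd (pts i))"
  proof -
    have "(3 * i + 2) div 3 = i" "(3 * i + 2) mod 3 = 2" by presburger+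
    then show ?thesis unfolding flat_pts_def by (cases "pts i") simp
  qed
  finally show ?thesis .
qed

lemma H_effective: "effective n pts 1 (\<lambda>_. 0)"
proof -
  define c where "c u = (if u = (1::nat, 0::nat, 0::nat) then (1::complex) else 0)" for u
  have "hom_form 1 c" unfolding hom_form_def c_def form_monos_def by auto
  moreover have "\<exists>u. c u \<noteq> 0" unfolding c_def by auto
  moreover have "mult_ge 1 c 0 (pts i)" for i unfolding mult_ge_def by simp
  ultimately show ?thesis unfolding effective_def by auto
qed

lemma z_nonzero: "(\<forall>j. mpoly_eval (3 * n) (Fw n j) (flat_pts pts) \<noteq> 0) \<Longrightarrow> \<forall>i<n. snd (snd (pts i)) \<noteq> 0"
proof (intro allI impI)
  fix i assume h: "\<forall>j. mpoly_eval (3 * n) (Fw n j) (flat_pts pts) \<noteq> 0" and i: "i < n"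
  show "snd (snd (pts i)) \<noteq> 0" using h Fw_eval[OF i, of pts] by metis
qed

lemma part1:
  assumes n: "n \<in> {10,11,12::nat}" and z: "\<forall>i<n. snd (snd (pts i)) \<noteq> 0" and "odd k"
  shows "\<exists>d mk :: int. 2 * d = cf_p (sqrt n) k - 3 \<and> 2 * mk = cf_q (sqrt n) k - 1 \<and>
           effective n pts d (\<lambda>_. mk) \<and> chi n d (\<lambda>_. mk) = 1 \<and>
           2 * inter n (Bcls n) (icls d (\<lambda>_. mk)) < inter n (Bcls n) canon"
proof -
  from \<open>odd k\<close> obtain j where kj: "k = 2 * j + 1" by (metis oddE)
  obtain P Q where pq: "PQ n j = (P, Q)" by force
  have inv: "P^2 - int n * Q^2 = 9 - int n" "odd P" "odd Q" "P > 0" "Q > 0"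
    using PQ_inv[OF n, of j] pq by auto
  have cp: "cf_p (sqrt n) k = P" "cf_q (sqrt n) k = Q"
    using cnum_PQ[OF n, of j] pq kj by (auto simp: cf_p_def cf_q_def)
  obtain x where "P = 2 * x + 1" using inv(2) by (rule oddE)
    then obtain d where d: "P = 2 * d + 3" by (intro that[of "x - 1"]) simp
  obtain mk where mk: "Q = 2 * mk + 1" using inv(3) by (metis oddE)
  have mk0: "mk \<ge> 0" using inv(5) mk by simp
  have "Q^2 \<ge> 1" using inv(5) by (simp add: one_le_power)
  then have "P^2 \<ge> 9" using inv(1) n by auto
  then have "P \<ge> 3"
    proof (rule contrapos_pp)
      assume "\<not> P \<ge> 3"
      then have "P^2 \<le> 2^2" using inv(4) by (intro power_mono) auto
      then show "\<not> P^2 \<ge> 9" by simp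
    qed
  then have d0: "d \<ge> 0" using d by simp
  have "8 * chi n d (\<lambda>_. mk) = (2*d+3)^2 - (\<Sum>i<n. (2*mk+1)^2) + int n - 1" by (rule chi_identity)
  also have "\<dots> = P^2 - int n * Q^2 + int n - 1" using d mk by simp
  also have "\<dots> = 8" using inv(1) by simp
  finally have ch: "chi n d (\<lambda>_. mk) = 1" by simp
  have ineq: "2 * inter n (Bcls n) (icls d (\<lambda>_. mk)) < inter n (Bcls n) canon"
  proof -
    have "P^2 < int n * Q^2" using inv(1) n by auto
    then have "real_of_int (P^2) < real_of_int (int n * Q^2)" by (simp only: of_int_less_iff)
    then have r: "(real_of_int P)^2 < real n * (real_of_int Q)^2" by simp
    have "(sqrt n * real_of_int P)^2 = real n * (real_of_int P)^2" by (simp add: power_mult_distrib)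
    also have "\<dots> < real n * (real n * (real_of_int Q)^2)" using r n by (intro mult_strict_left_mono) auto
    also have "\<dots> = (real n * real_of_int Q)^2" by (simp add: power_mult_distrib power2_eq_square)
    finally have "(sqrt n * real_of_int P)^2 < (real n * real_of_int Q)^2" .
    then have "sqrt n * real_of_int P < real n * real_of_int Q"
      by (rule power_less_imp_less_base) (use inv(5) in simp)
    then show ?thesis unfolding inter_B using d mk by (simp add: algebra_simps)
  qed
  show "\<exists>d mk :: int. 2 * d = cf_p (sqrt n) k - 3 \<and> 2 * mk = cf_q (sqrt n) k - 1 \<and>
       effective n pts d (\<lambda>_. mk) \<and> chi n d (\<lambda>_. mk) = 1 \<and>
       2 * inter n (Bcls n) (icls d (\<lambda>_. mk)) < inter n (Bcls n) canon"
    using effective_exists[OF d0 mk0 _ z] ch ineq cp d mk by (intro exI[of _ d] exI[of _ mk]) auto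
qed

lemma part2':
  assumes n: "n \<in> {10,11,12::nat}"
    and h: "effective n pts d m \<and> chi n d m \<ge> 1 \<and>
        (\<exists>t::real. ample_A n pts t \<and> 2 * inter n (Acls t) (icls d m) < inter n (Acls t) canon)"
  shows "\<exists>k::nat. odd k \<and> 2 * d = cf_p (sqrt n) k - 3 \<and> (\<forall>i<n. 2 * m i = cf_q (sqrt n) k - 1)"
proof -
  from h obtain t where t: "ample_A n pts t" "2 * inter n (Acls t) (icls d m) < inter n (Acls t) canon" by blast
  have d0: "d \<ge> 0" using h unfolding effective_def by blast
  have "inter n (Acls t) (Acls t) > 0" using t(1) unfolding ample_A_def by blast
  then have tn: "t^2 > real n" unfolding inter_def Acls_def by (simp add: power2_eq_square)
  have "inter n (Acls t) (icls 1 (\<lambda>_. 0)) > 0"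
    using t(1) H_effective[of n pts] unfolding ample_A_def by auto
  then have t0: "t > 0" unfolding inter_def Acls_def icls_def by simp
  show "\<exists>k::nat. odd k \<and> 2 * d = cf_p (sqrt n) k - 3 \<and> (\<forall>i<n. 2 * m i = cf_q (sqrt n) k - 1)"
    using part2[OF n d0 _ t0 tn t(2)] h by blast
qed

theorem theorem4p8:
  fixes n :: nat
  assumes "10 \<le> n" and "n \<le> 12"
  shows "very_general n (\<lambda>pts.
     (\<forall>k::nat. odd k \<longrightarrow>
        (\<exists>d mk :: int. 2 * d = cf_p (sqrt n) k - 3 \<and> 2 * mk = cf_q (sqrt n) k - 1 \<and>
           effective n pts d (\<lambda>_. mk) \<and> chi n d (\<lambda>_. mk) = 1 \<and>
           2 * inter n (Bcls n) (icls d (\<lambda>_. mk)) < inter n (Bcls n) canon))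
   \<and> (\<forall>(d::int) (m::nat \<Rightarrow> int).
        effective n pts d m \<and> chi n d m \<ge> 1 \<and>
        (\<exists>t::real. ample_A n pts t \<and> 2 * inter n (Acls t) (icls d m) < inter n (Acls t) canon)
        \<longrightarrow> (\<exists>k::nat. odd k \<and> 2 * d = cf_p (sqrt n) k - 3 \<and>
                        (\<forall>i<n. 2 * m i = cf_q (sqrt n) k - 1))))"
proof -
  have n: "n \<in> {10,11,12}" using assms by auto
  show ?thesis
    unfolding very_general_def
    using Fw_ok part1[OF n z_nonzero] part2'[OF n]
    by (intro exI[of _ "Fw n"]) blast
qed

end
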